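(* For $(u,\rho)\in H_{0,\infty}(\mathbb R)\times L^2_{\rm const}(\mathbb R)$ let $X_e(x)=(x,\bar u(x),c,1,u_x(x),u_x^2(x)+\bar\rho^2(x),\bar\rho(x),k)$ and write $g(u,\rho)$ for the function $x\mapsto g(X_e(x))$. Then $g(u,\rho)-1\in L^1(\mathbb R)$, and: (i) If $(u_1,\rho_1),(u_2,\rho_2)\in H_{0,\infty}(\mathbb R)\times L^2_{\rm const}(\mathbb R)$ satisfy $\operatorname{meas}(\{x:(\rho_1(x)=0\text{ and }\rho_2(x)\ne0)\text{ or }(\rho_1(x)\ne0\text{ and }\rho_2(x)=0)\})=0$, then $$\|g(u_1,\rho_1)-g(u_2,\rho_2)\|_{L^1}\le C\big(\|u_{1,x}-u_{2,x}\|_{L^2}+\|\bar\rho_1-\bar\rho_2\|_{L^2}\big),$$ where $C$ depends only on the $L^2$-norms of $u_{1,x},u_{2,x},\bar\rho_1,\bar\rho_2$. (ii) If $(u_n,\rho_n)\to(u,\rho)$ in $H_{0,\infty}(\mathbb R)\times L^2_{\rm const}(\mathbb R)$ and for all $n$, $\operatorname{meas}(\{x:(\rho(x)=0\text{ and }\rho_n(x)\ne0)\text{ or }(\rho(x)\ne0\text{ and }\rho_n(x)=0)\})=0$, then $g(u_n,\rho_n)-1\to g(u,\rho)-1$ in $L^1(\mathbb R)$.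
   Context: Fix a smooth $\chi:\mathbb R\to\mathbb R$ with $\chi'\ge0$, $\chi=0$ on $(-\infty,0]$, $\chi=1$ on $[1,\infty)$. $H_{0,\infty}(\mathbb R)=\{u=\bar u+c\chi:\bar u\in H^1(\mathbb R),c\in\mathbb R\}$ with norm $\|\bar u\|_{H^1}+|c|$; $L^2_{\rm const}(\mathbb R)=\{\rho=\bar\rho+k:\bar\rho\in L^2(\mathbb R),k\in\mathbb R\}$ with norm $\|\bar\rho\|_{L^2}+|k|$. For $x\in\mathbb R^8$: $g_1(x)=|x_5|+2|x_7x_8|+2x_4$, $g_2(x)=x_4+x_6$, $\Omega_1=\{x:g_1(x)\le g_2(x),\ x_5\le0,\ x_7+x_8x_4=0\}$, and $g=g_1$ on $\Omega_1$, $g=g_2$ on $\mathbb R^8\setminus\Omega_1$. *)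

theory Defs
  imports "HOL-Analysis.Analysis"
begin

definition cutoff :: "(real \<Rightarrow> real) \<Rightarrow> bool" where
  "cutoff chi \<longleftrightarrow>
     (\<forall>n x. ((deriv ^^ n) chi) differentiable (at x)) \<and>
     (\<forall>x. deriv chi x \<ge> 0) \<and>
     (\<forall>x. x \<le> 0 \<longrightarrow> chi x = 0) \<and>
     (\<forall>x. x \<ge> 1 \<longrightarrow> chi x = 1)"

definition L2 :: "(real \<Rightarrow> real) \<Rightarrow> bool" where
  "L2 f \<longleftrightarrow> f \<in> borel_measurable lborel \<and> integrable lborel (\<lambda>x. (f x)\<^sup>2)"

definition L2norm :: "(real \<Rightarrow> real) \<Rightarrow> real" where
  "L2norm f = sqrt (\<integral>x. (f x)\<^sup>2 \<partial>lborel)"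

definition L1norm :: "(real \<Rightarrow> real) \<Rightarrow> real" where
  "L1norm f = (\<integral>x. \<bar>f x\<bar> \<partial>lborel)"

text \<open>H^1(R): ub in L^2 with (weak) derivative w in L^2; ub is taken to be the
  absolutely continuous representative, ub b - ub a = integral of w over [a,b].\<close>
definition H1 :: "(real \<Rightarrow> real) \<Rightarrow> (real \<Rightarrow> real) \<Rightarrow> bool" where
  "H1 ub w \<longleftrightarrow> L2 ub \<and> L2 w \<and>
     (\<forall>a b. a \<le> b \<longrightarrow> ub b - ub a = (LBINT x=a..b. w x))"

definition H1norm :: "(real \<Rightarrow> real) \<Rightarrow> (real \<Rightarrow> real) \<Rightarrow> real" where
  "H1norm ub w = sqrt ((L2norm ub)\<^sup>2 + (L2norm w)\<^sup>2)"

definition gg1 :: "real \<Rightarrow> real \<Rightarrow> real \<Rightarrow> real \<Rightarrow> real \<Rightarrow> real \<Rightarrow> real \<Rightarrow> real \<Rightarrow> real" where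
  "gg1 x1 x2 x3 x4 x5 x6 x7 x8 = \<bar>x5\<bar> + 2 * \<bar>x7 * x8\<bar> + 2 * x4"

definition gg2 :: "real \<Rightarrow> real \<Rightarrow> real \<Rightarrow> real \<Rightarrow> real \<Rightarrow> real \<Rightarrow> real \<Rightarrow> real \<Rightarrow> real" where
  "gg2 x1 x2 x3 x4 x5 x6 x7 x8 = x4 + x6"

definition in_Omega1 :: "real \<Rightarrow> real \<Rightarrow> real \<Rightarrow> real \<Rightarrow> real \<Rightarrow> real \<Rightarrow> real \<Rightarrow> real \<Rightarrow> bool" where
  "in_Omega1 x1 x2 x3 x4 x5 x6 x7 x8 \<longleftrightarrow>
     gg1 x1 x2 x3 x4 x5 x6 x7 x8 \<le> gg2 x1 x2 x3 x4 x5 x6 x7 x8 \<and> x5 \<le> 0 \<and> x7 + x8 * x4 = 0"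

definition gg :: "real \<Rightarrow> real \<Rightarrow> real \<Rightarrow> real \<Rightarrow> real \<Rightarrow> real \<Rightarrow> real \<Rightarrow> real \<Rightarrow> real" where
  "gg x1 x2 x3 x4 x5 x6 x7 x8 =
     (if in_Omega1 x1 x2 x3 x4 x5 x6 x7 x8 then gg1 x1 x2 x3 x4 x5 x6 x7 x8
      else gg2 x1 x2 x3 x4 x5 x6 x7 x8)"

text \<open>u = ub + c chi with ub' = w; u_x = w + c chi'.\<close>
definition ux :: "(real \<Rightarrow> real) \<Rightarrow> (real \<Rightarrow> real) \<Rightarrow> real \<Rightarrow> real \<Rightarrow> real" where
  "ux chi w c x = w x + c * deriv chi x"

definition gX :: "(real \<Rightarrow> real) \<Rightarrow> (real \<Rightarrow> real) \<Rightarrow> (real \<Rightarrow> real) \<Rightarrow> real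
                  \<Rightarrow> (real \<Rightarrow> real) \<Rightarrow> real \<Rightarrow> real \<Rightarrow> real" where
  "gX chi ub w c rb k x =
     gg x (ub x) c 1 (ux chi w c x) ((ux chi w c x)\<^sup>2 + (rb x)\<^sup>2) (rb x) k"

text \<open>The set where exactly one of rho1 = rb1 + k1, rho2 = rb2 + k2 vanishes.\<close>
definition zero_mismatch :: "(real \<Rightarrow> real) \<Rightarrow> real \<Rightarrow> (real \<Rightarrow> real) \<Rightarrow> real \<Rightarrow> real set" where
  "zero_mismatch rb1 k1 rb2 k2 =
     {x. (rb1 x + k1 = 0 \<and> rb2 x + k2 \<noteq> 0) \<or> (rb1 x + k1 \<noteq> 0 \<and> rb2 x + k2 = 0)}"

end

theory Submission imports Defs begin

lemma absle1: "(1::real) \<le> \<bar>u\<bar> \<Longrightarrow> \<bar>d\<bar> \<le> \<bar>d\<bar> * \<bar>u\<bar>"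
  by (metis abs_ge_zero mult.right_neutral mult_left_mono)

lemma sqdiff: "\<bar>(a::real)^2 - b^2\<bar> \<le> \<bar>a - b\<bar> * (\<bar>a\<bar> + \<bar>b\<bar>)"
proof -
  have "\<bar>a^2 - b^2\<bar> = \<bar>a - b\<bar> * \<bar>a + b\<bar>" by (simp add: power2_eq_square algebra_simps abs_mult[symmetric])
  also have "\<dots> \<le> \<bar>a - b\<bar> * (\<bar>a\<bar> + \<bar>b\<bar>)" by (intro mult_left_mono abs_triangle_ineq) auto
  finally show ?thesis .
qed

lemma ab1: "\<bar>(a::real) + 2*b + 2 - (c + 2*d + 2)\<bar> \<le> \<bar>a - c\<bar> + 2*\<bar>b - d\<bar>"
proof -
  have "\<bar>(a::real) + 2*b + 2 - (c + 2*d + 2)\<bar> = \<bar>(a-c) + 2*(b-d)\<bar>" by (simp add: algebra_simps)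
  also have "\<dots> \<le> \<bar>a-c\<bar> + \<bar>2*(b-d)\<bar>" by (rule abs_triangle_ineq)
  also have "\<bar>2*(b-d)\<bar> = 2*\<bar>b-d\<bar>" by (simp only: abs_mult abs_numeral)
  finally show ?thesis by simp
qed
lemma ab2: "\<bar>(1::real) + (a + b) - (1 + (c + d))\<bar> \<le> \<bar>a - c\<bar> + \<bar>b - d\<bar>" by arith

lemma in_O1:
  fixes u1 r1 k1 :: real
  assumes "in_Omega1 a1 a2 a3 1 u1 (u1\<^sup>2+r1\<^sup>2) r1 k1"
  shows "k1 = - r1" "u1 \<le> 0" "\<bar>u1\<bar> + 2*r1\<^sup>2 + 2 \<le> 1 + u1\<^sup>2 + r1\<^sup>2"
    "gg a1 a2 a3 1 u1 (u1\<^sup>2+r1\<^sup>2) r1 k1 = \<bar>u1\<bar> + 2*r1\<^sup>2 + 2" "1 \<le> \<bar>u1\<bar>"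
proof -
  show k1: "k1 = - r1" and u1n: "u1 \<le> 0"
    using assms by (auto simp: in_Omega1_def)
  have a: "\<bar>u1\<bar> + 2*\<bar>r1 * k1\<bar> + 2*1 \<le> 1 + (u1\<^sup>2 + r1\<^sup>2)"
    using assms unfolding in_Omega1_def gg1_def gg2_def by blast
  have b: "\<bar>r1 * k1\<bar> = r1\<^sup>2" using k1 by (simp add: power2_eq_square abs_mult)
  show c1: "\<bar>u1\<bar> + 2*r1\<^sup>2 + 2 \<le> 1 + u1\<^sup>2 + r1\<^sup>2"
    using a unfolding b by simp
  show "gg a1 a2 a3 1 u1 (u1\<^sup>2+r1\<^sup>2) r1 k1 = \<bar>u1\<bar> + 2*r1\<^sup>2 + 2"
    using assms k1 by (simp add: gg_def gg1_def abs_mult power2_eq_square)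
  show u1ge: "1 \<le> \<bar>u1\<bar>"
  proof (rule ccontr)
    assume "\<not> 1 \<le> \<bar>u1\<bar>"
    then have "\<bar>u1\<bar> * \<bar>u1\<bar> \<le> \<bar>u1\<bar> * 1" by (intro mult_left_mono) auto
    then have "u1\<^sup>2 \<le> \<bar>u1\<bar>" by (simp add: power2_eq_square)
    moreover have "0 \<le> r1\<^sup>2" by simp
    ultimately show False using c1 by linarith
  qed
qed

lemma notin_O1:
  assumes "\<not> in_Omega1 a1 a2 a3 1 u1 (u1\<^sup>2+r1\<^sup>2) r1 k1"
  shows "gg a1 a2 a3 1 u1 (u1\<^sup>2+r1\<^sup>2) r1 k1 = 1 + (u1\<^sup>2+r1\<^sup>2)"
  using assms by (simp add: gg_def gg2_def)

lemma ptwise_mixed: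
  fixes u1 u2 r1 r2 k1 k2 :: real
  assumes z: "(r1 + k1 = 0) = (r2 + k2 = 0)"
    and i1: "in_Omega1 a1 a2 a3 1 u1 (u1\<^sup>2+r1\<^sup>2) r1 k1"
    and i2: "\<not> in_Omega1 b1 b2 b3 1 u2 (u2\<^sup>2+r2\<^sup>2) r2 k2"
  shows "\<bar>gg a1 a2 a3 1 u1 (u1\<^sup>2+r1\<^sup>2) r1 k1 - gg b1 b2 b3 1 u2 (u2\<^sup>2+r2\<^sup>2) r2 k2\<bar>
     \<le> 2*\<bar>u1-u2\<bar>*(\<bar>u1\<bar>+\<bar>u2\<bar>) + 2*\<bar>r1-r2\<bar>*(\<bar>r1\<bar>+\<bar>r2\<bar>)"
proof -
  note O1 = in_O1[OF i1]
  have G2: "gg b1 b2 b3 1 u2 (u2\<^sup>2+r2\<^sup>2) r2 k2 = 1 + (u2\<^sup>2+r2\<^sup>2)" by (rule notin_O1[OF i2])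
  have k2: "k2 = - r2" using z O1(1) by auto
  define Su where "Su = \<bar>u1-u2\<bar>*(\<bar>u1\<bar>+\<bar>u2\<bar>)"
  define Sr where "Sr = \<bar>r1-r2\<bar>*(\<bar>r1\<bar>+\<bar>r2\<bar>)"
  define P where "P = \<bar>u1-u2\<bar>*\<bar>u1\<bar>"
  have su: "\<bar>u1\<^sup>2 - u2\<^sup>2\<bar> \<le> Su" unfolding Su_def by (rule sqdiff)
  have sr: "\<bar>r1\<^sup>2 - r2\<^sup>2\<bar> \<le> Sr" unfolding Sr_def by (rule sqdiff)
  have nn: "0 \<le> Su" "0 \<le> Sr" unfolding Su_def Sr_def by auto
  have dd: "\<bar>u1 - u2\<bar> \<le> P" unfolding P_def using absle1[OF O1(5)] .
  have dd2: "P \<le> Su" unfolding P_def Su_def by (simp add: mult_left_mono)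
  have up: "u1\<^sup>2 \<le> Su" if "0 < u2"
  proof -
    have "u1\<^sup>2 = \<bar>u1\<bar> * \<bar>u1\<bar>" by (simp add: power2_eq_square)
    also have "\<dots> \<le> \<bar>u1-u2\<bar>*\<bar>u1\<bar>" using that O1(2) by (intro mult_right_mono) auto
    finally show ?thesis using dd2 P_def by linarith
  qed
  have r0: "0 \<le> r1\<^sup>2" "0 \<le> \<bar>u1\<bar>" by simp_all
  have lhs: "\<bar>u1\<bar> + 2*r1\<^sup>2 + 2 - (1 + (u2\<^sup>2+r2\<^sup>2)) \<le> Su + Sr"
    using O1(3) su sr by linarith
  have rhs: "(1 + (u2\<^sup>2+r2\<^sup>2)) - (\<bar>u1\<bar> + 2*r1\<^sup>2 + 2) \<le> 2*Su + 2*Sr"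
  proof (cases "u2 \<le> 0")
    case True
    then have "\<not> gg1 b1 b2 b3 1 u2 (u2\<^sup>2+r2\<^sup>2) r2 k2 \<le> gg2 b1 b2 b3 1 u2 (u2\<^sup>2+r2\<^sup>2) r2 k2"
      using i2 k2 by (auto simp: in_Omega1_def)
    then have c2: "1 + u2\<^sup>2 + r2\<^sup>2 < \<bar>u2\<bar> + 2*r2\<^sup>2 + 2"
      using k2 by (simp add: gg1_def gg2_def abs_mult power2_eq_square)
    have "\<bar>u2\<bar> - \<bar>u1\<bar> \<le> \<bar>u1 - u2\<bar>" by linarith
    then show ?thesis using c2 sr dd dd2 nn by linarith
  next
    case False
    then show ?thesis using up su sr r0 by linarith
  qed
  have "\<bar>(\<bar>u1\<bar> + 2*r1\<^sup>2 + 2) - (1 + (u2\<^sup>2+r2\<^sup>2))\<bar> \<le> 2*Su + 2*Sr"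
    using lhs rhs nn by linarith
  then show ?thesis unfolding O1(4) G2 Su_def Sr_def by simp
qed

lemma ptwise:
  fixes u1 u2 r1 r2 k1 k2 :: real
  assumes z: "(r1 + k1 = 0) = (r2 + k2 = 0)"
  shows "\<bar>gg a1 a2 a3 1 u1 (u1\<^sup>2+r1\<^sup>2) r1 k1 - gg b1 b2 b3 1 u2 (u2\<^sup>2+r2\<^sup>2) r2 k2\<bar>
     \<le> 2*\<bar>u1-u2\<bar>*(\<bar>u1\<bar>+\<bar>u2\<bar>) + 2*\<bar>r1-r2\<bar>*(\<bar>r1\<bar>+\<bar>r2\<bar>)"
proof -
  define Su where "Su = \<bar>u1-u2\<bar>*(\<bar>u1\<bar>+\<bar>u2\<bar>)"
  define Sr where "Sr = \<bar>r1-r2\<bar>*(\<bar>r1\<bar>+\<bar>r2\<bar>)"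
  have su: "\<bar>u1\<^sup>2 - u2\<^sup>2\<bar> \<le> Su" unfolding Su_def by (rule sqdiff)
  have sr: "\<bar>r1\<^sup>2 - r2\<^sup>2\<bar> \<le> Sr" unfolding Sr_def by (rule sqdiff)
  have nn: "0 \<le> Su" "0 \<le> Sr" unfolding Su_def Sr_def by auto
  consider (a) "in_Omega1 a1 a2 a3 1 u1 (u1\<^sup>2+r1\<^sup>2) r1 k1" "in_Omega1 b1 b2 b3 1 u2 (u2\<^sup>2+r2\<^sup>2) r2 k2"
    | (b) "in_Omega1 a1 a2 a3 1 u1 (u1\<^sup>2+r1\<^sup>2) r1 k1" "\<not> in_Omega1 b1 b2 b3 1 u2 (u2\<^sup>2+r2\<^sup>2) r2 k2"
    | (c) "\<not> in_Omega1 a1 a2 a3 1 u1 (u1\<^sup>2+r1\<^sup>2) r1 k1" "in_Omega1 b1 b2 b3 1 u2 (u2\<^sup>2+r2\<^sup>2) r2 k2"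
    | (d) "\<not> in_Omega1 a1 a2 a3 1 u1 (u1\<^sup>2+r1\<^sup>2) r1 k1" "\<not> in_Omega1 b1 b2 b3 1 u2 (u2\<^sup>2+r2\<^sup>2) r2 k2"
    by blast
  then show ?thesis
  proof cases
    case a
    note O1 = in_O1[OF a(1)] and O2 = in_O1[OF a(2)]
    define P where "P = \<bar>u1-u2\<bar>*\<bar>u1\<bar>"
    have dd: "\<bar>u1 - u2\<bar> \<le> P" unfolding P_def using absle1[OF O1(5)] .
    have dd2: "P \<le> Su" unfolding P_def Su_def by (simp add: mult_left_mono)
    have e: "\<bar>\<bar>u1\<bar> - \<bar>u2\<bar>\<bar> \<le> \<bar>u1 - u2\<bar>" by (rule abs_triangle_ineq3)
    have "\<bar>(\<bar>u1\<bar> + 2*r1\<^sup>2 + 2) - (\<bar>u2\<bar> + 2*r2\<^sup>2 + 2)\<bar> \<le> \<bar>\<bar>u1\<bar> - \<bar>u2\<bar>\<bar> + 2*\<bar>r1\<^sup>2 - r2\<^sup>2\<bar>"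
      by (rule ab1)
    also have "\<dots> \<le> 2*Su + 2*Sr" using e dd dd2 sr nn by linarith
    finally show ?thesis unfolding O1(4) O2(4) Su_def Sr_def by (simp add: mult.assoc)
  next
    case b then show ?thesis using ptwise_mixed[OF z] by blast
  next
    case c
    have "\<bar>gg b1 b2 b3 1 u2 (u2\<^sup>2+r2\<^sup>2) r2 k2 - gg a1 a2 a3 1 u1 (u1\<^sup>2+r1\<^sup>2) r1 k1\<bar>
     \<le> 2*\<bar>u2-u1\<bar>*(\<bar>u2\<bar>+\<bar>u1\<bar>) + 2*\<bar>r2-r1\<bar>*(\<bar>r2\<bar>+\<bar>r1\<bar>)"
      using ptwise_mixed[OF z[symmetric] c(2) c(1)] by blast
    then show ?thesis by (simp add: abs_minus_commute add.commute)
  next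
    case d
    have "\<bar>(1 + (u1\<^sup>2+r1\<^sup>2)) - (1 + (u2\<^sup>2+r2\<^sup>2))\<bar> \<le> \<bar>u1\<^sup>2 - u2\<^sup>2\<bar> + \<bar>r1\<^sup>2 - r2\<^sup>2\<bar>"
      by (rule ab2)
    also have "\<dots> \<le> 2*Su + 2*Sr" using su sr nn by linarith
    finally show ?thesis unfolding notin_O1[OF d(1)] notin_O1[OF d(2)] Su_def Sr_def by (simp add: mult.assoc)
  qed
qed


section \<open>Cutoff\<close>

lemma cutoff_cont: assumes "cutoff chi" shows "continuous_on UNIV (deriv chi)"
proof -
  have "\<forall>x. ((deriv ^^ Suc 0) chi) differentiable (at x)"
    using assms unfolding cutoff_def by blast
  then have "\<forall>x. (deriv chi) differentiable (at x)" by simp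
  then show ?thesis
    by (simp add: continuous_at_imp_continuous_on differentiable_imp_continuous_within)
qed

lemma cutoff_meas[measurable]: assumes "cutoff chi" shows "deriv chi \<in> borel_measurable lborel"
  using borel_measurable_continuous_onI[OF cutoff_cont[OF assms]] by simp

lemma cutoff_zero: assumes "cutoff chi" and "x \<notin> {0..1}" shows "deriv chi x = 0"
proof -
  from assms(2) consider "x < 0" | "x > 1" by force
  then show ?thesis
  proof cases
    case 1
    have "((\<lambda>_. 0::real) has_field_derivative 0) (at x)" by simp
    then have "(chi has_field_derivative 0) (at x)"
      by (rule has_field_derivative_transform_within_open[where S="{..<0}"])
         (use 1 assms(1) in \<open>auto simp: cutoff_def\<close>)
    then show ?thesis by (rule DERIV_imp_deriv)
  next
    case 2
    have "((\<lambda>_. 1::real) has_field_derivative 0) (at x)" by simp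
    then have "(chi has_field_derivative 0) (at x)"
      by (rule has_field_derivative_transform_within_open[where S="{1<..}"])
         (use 2 assms(1) in \<open>auto simp: cutoff_def\<close>)
    then show ?thesis by (rule DERIV_imp_deriv)
  qed
qed

lemma cutoff_L2: assumes "cutoff chi" shows "L2 (deriv chi)"
proof -
  have "continuous_on {0..1} (\<lambda>x. (deriv chi x)\<^sup>2)"
    using cutoff_cont[OF assms] by (intro continuous_intros) (auto intro: continuous_on_subset)
  then have "integrable lborel (\<lambda>x. indicator {0..1::real} x *\<^sub>R (deriv chi x)\<^sup>2)"
    by (intro borel_integrable_compact) auto
  moreover have "(\<lambda>x. indicator {0..1::real} x *\<^sub>R (deriv chi x)\<^sup>2) = (\<lambda>x. (deriv chi x)\<^sup>2)"
    using cutoff_zero[OF assms] by (auto simp: indicator_def fun_eq_iff)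
  ultimately show ?thesis unfolding L2_def using cutoff_meas[OF assms] by simp
qed

section \<open>L2\<close>

lemma L2_meas: "L2 f \<Longrightarrow> f \<in> borel_measurable lborel" by (simp add: L2_def)
lemma L2_sq: "L2 f \<Longrightarrow> integrable lborel (\<lambda>x. (f x)\<^sup>2)" by (simp add: L2_def)

lemma L2_add: assumes "L2 f" "L2 g" shows "L2 (\<lambda>x. f x + g x)"
proof -
  note [measurable] = L2_meas[OF assms(1)] L2_meas[OF assms(2)]
  have "integrable lborel (\<lambda>x. 2 * (f x)\<^sup>2 + 2 * (g x)\<^sup>2)"
    using L2_sq[OF assms(1)] L2_sq[OF assms(2)] by auto
  moreover have "\<bar>(f x + g x)\<^sup>2\<bar> \<le> \<bar>2 * (f x)\<^sup>2 + 2 * (g x)\<^sup>2\<bar>" for x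
  proof -
    have "0 \<le> (f x - g x)\<^sup>2" "0 \<le> (f x + g x)\<^sup>2" by simp_all
    moreover have "(f x + g x)^2 + (f x - g x)^2 = 2*(f x)^2 + 2*(g x)^2"
      by (simp add: power2_eq_square algebra_simps)
    ultimately have "(f x + g x)\<^sup>2 \<le> 2 * (f x)\<^sup>2 + 2 * (g x)\<^sup>2" by linarith
    then show ?thesis by simp
  qed
  note facts = calculation this
  have m: "(\<lambda>x. (f x + g x)\<^sup>2) \<in> borel_measurable lborel" by measurable
  have "integrable lborel (\<lambda>x. (f x + g x)\<^sup>2)"
    by (rule Bochner_Integration.integrable_bound[OF facts(1) m AE_I2]) (use facts(2) in simp)
  then show ?thesis unfolding L2_def by simp
qed

lemma L2_scale: assumes "L2 f" shows "L2 (\<lambda>x. c * f x)"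
proof -
  note [measurable] = L2_meas[OF assms(1)]
  show ?thesis using assms unfolding L2_def by (simp add: power_mult_distrib)
qed

lemma L2_diff: assumes "L2 f" "L2 g" shows "L2 (\<lambda>x. f x - g x)"
  using L2_add[OF assms(1) L2_scale[OF assms(2), of "-1"]] by simp

lemma L2_abs_prod: assumes "L2 f" "L2 g" shows "integrable lborel (\<lambda>x. \<bar>f x\<bar> * \<bar>g x\<bar>)"
proof -
  note [measurable] = L2_meas[OF assms(1)] L2_meas[OF assms(2)]
  have "integrable lborel (\<lambda>x. (f x)\<^sup>2 + (g x)\<^sup>2)"
    using L2_sq[OF assms(1)] L2_sq[OF assms(2)] by auto
  moreover have "norm (\<bar>f x\<bar> * \<bar>g x\<bar>) \<le> norm ((f x)\<^sup>2 + (g x)\<^sup>2)" for x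
  proof -
    have "0 \<le> (\<bar>f x\<bar> - \<bar>g x\<bar>)\<^sup>2" "0 \<le> \<bar>f x\<bar> * \<bar>g x\<bar>" by simp_all
    moreover have "(\<bar>f x\<bar> - \<bar>g x\<bar>)\<^sup>2 + 2 * (\<bar>f x\<bar> * \<bar>g x\<bar>) = (f x)\<^sup>2 + (g x)\<^sup>2"
      by (simp add: power2_eq_square algebra_simps)
    ultimately have "\<bar>f x\<bar> * \<bar>g x\<bar> \<le> (f x)\<^sup>2 + (g x)\<^sup>2" by linarith
    then show ?thesis by simp
  qed
  note facts = calculation this
  have m: "(\<lambda>x. \<bar>f x\<bar> * \<bar>g x\<bar>) \<in> borel_measurable lborel" by measurable
  show ?thesis
    by (rule Bochner_Integration.integrable_bound[OF facts(1) m AE_I2]) (use facts(2) in simp)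
qed

lemma L2norm_nonneg: "0 \<le> L2norm f" by (simp add: L2norm_def)

lemma L2norm_sq: "L2 f \<Longrightarrow> (L2norm f)\<^sup>2 = (\<integral>x. (f x)\<^sup>2 \<partial>lborel)"
  by (simp add: L2norm_def)

lemma CS: assumes "L2 f" "L2 g"
  shows "(\<integral>x. \<bar>f x\<bar> * \<bar>g x\<bar> \<partial>lborel) \<le> L2norm f * L2norm g"
proof -
  note [measurable] = L2_meas[OF assms(1)] L2_meas[OF assms(2)]
  define I where "I = (\<integral>x. \<bar>f x\<bar> * \<bar>g x\<bar> \<partial>lborel)"
  define A where "A = (\<integral>x. (f x)\<^sup>2 \<partial>lborel)"
  define B where "B = (\<integral>x. (g x)\<^sup>2 \<partial>lborel)"
  have I0: "0 \<le> I" unfolding I_def by (intro integral_nonneg_AE) auto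
  have A0: "0 \<le> A" unfolding A_def by (intro integral_nonneg_AE) auto
  have B0: "0 \<le> B" unfolding B_def by (intro integral_nonneg_AE) auto
  have eI: "(\<integral>\<^sup>+x. ennreal \<bar>f x\<bar> * ennreal \<bar>g x\<bar> \<partial>lborel) = ennreal I"
  proof -
    have "(\<integral>\<^sup>+x. ennreal \<bar>f x\<bar> * ennreal \<bar>g x\<bar> \<partial>lborel) = (\<integral>\<^sup>+x. ennreal (\<bar>f x\<bar> * \<bar>g x\<bar>) \<partial>lborel)"
      by (simp add: ennreal_mult'')
    also have "\<dots> = ennreal I" unfolding I_def
      by (intro nn_integral_eq_integral L2_abs_prod assms) auto
    finally show ?thesis .
  qed
  have eA: "(\<integral>\<^sup>+x. (ennreal \<bar>f x\<bar>)^2 \<partial>lborel) = ennreal A"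
  proof -
    have "(\<integral>\<^sup>+x. (ennreal \<bar>f x\<bar>)^2 \<partial>lborel) = (\<integral>\<^sup>+x. ennreal ((f x)^2) \<partial>lborel)"
      by (simp add: ennreal_power)
    also have "\<dots> = ennreal A" unfolding A_def
      by (intro nn_integral_eq_integral L2_sq assms) auto
    finally show ?thesis .
  qed
  have eB: "(\<integral>\<^sup>+x. (ennreal \<bar>g x\<bar>)^2 \<partial>lborel) = ennreal B"
  proof -
    have "(\<integral>\<^sup>+x. (ennreal \<bar>g x\<bar>)^2 \<partial>lborel) = (\<integral>\<^sup>+x. ennreal ((g x)^2) \<partial>lborel)"
      by (simp add: ennreal_power)
    also have "\<dots> = ennreal B" unfolding B_def
      by (intro nn_integral_eq_integral L2_sq assms) auto
    finally show ?thesis .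
  qed
  have "(ennreal I)\<^sup>2 \<le> ennreal A * ennreal B"
    using Cauchy_Schwarz_nn_integral[of "\<lambda>x. ennreal \<bar>f x\<bar>" lborel "\<lambda>x. ennreal \<bar>g x\<bar>"]
    unfolding eI eA eB by simp
  then have "ennreal (I\<^sup>2) \<le> ennreal (A * B)"
    using I0 A0 B0 by (simp add: ennreal_power ennreal_mult'')
  then have "I\<^sup>2 \<le> A * B"
    using A0 B0 by (simp add: ennreal_le_iff)
  then have "sqrt (I\<^sup>2) \<le> sqrt (A * B)" by (rule real_sqrt_le_mono)
  then show ?thesis using I0 unfolding L2norm_def A_def[symmetric] B_def[symmetric] I_def[symmetric]
    by (simp add: real_sqrt_mult)
qed

lemma minkowski: assumes "L2 f" "L2 g"
  shows "L2norm (\<lambda>x. f x + g x) \<le> L2norm f + L2norm g"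
proof -
  note [measurable] = L2_meas[OF assms(1)] L2_meas[OF assms(2)]
  have i1: "integrable lborel (\<lambda>x. (f x)\<^sup>2)" "integrable lborel (\<lambda>x. (g x)\<^sup>2)"
    using L2_sq assms by auto
  have i2: "integrable lborel (\<lambda>x. \<bar>f x\<bar> * \<bar>g x\<bar>)" by (rule L2_abs_prod[OF assms])
  have "(\<integral>x. (f x + g x)\<^sup>2 \<partial>lborel) \<le> (\<integral>x. (f x)\<^sup>2 + 2 * (\<bar>f x\<bar> * \<bar>g x\<bar>) + (g x)\<^sup>2 \<partial>lborel)"
  proof (rule integral_mono_AE')
    show "integrable lborel (\<lambda>x. (f x)\<^sup>2 + 2 * (\<bar>f x\<bar> * \<bar>g x\<bar>) + (g x)\<^sup>2)"
      using i1 i2 by auto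
    show "AE x in lborel. (f x + g x)\<^sup>2 \<le> (f x)\<^sup>2 + 2 * (\<bar>f x\<bar> * \<bar>g x\<bar>) + (g x)\<^sup>2"
    proof (intro AE_I2)
      fix x
      have "f x * g x \<le> \<bar>f x\<bar> * \<bar>g x\<bar>" by (metis abs_ge_self abs_mult)
      then show "(f x + g x)\<^sup>2 \<le> (f x)\<^sup>2 + 2 * (\<bar>f x\<bar> * \<bar>g x\<bar>) + (g x)\<^sup>2"
        by (simp add: power2_eq_square algebra_simps)
    qed
    show "AE x in lborel. 0 \<le> (f x)\<^sup>2 + 2 * (\<bar>f x\<bar> * \<bar>g x\<bar>) + (g x)\<^sup>2" by auto
  qed
  also have "\<dots> = (L2norm f)\<^sup>2 + 2 * (\<integral>x. \<bar>f x\<bar> * \<bar>g x\<bar> \<partial>lborel) + (L2norm g)\<^sup>2"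
    using i1 i2 assms by (simp add: L2norm_sq)
  also have "\<dots> \<le> (L2norm f)\<^sup>2 + 2 * (L2norm f * L2norm g) + (L2norm g)\<^sup>2"
    using CS[OF assms] by simp
  also have "\<dots> = (L2norm f + L2norm g)\<^sup>2" by (simp add: power2_eq_square algebra_simps)
  finally have "sqrt (\<integral>x. (f x + g x)\<^sup>2 \<partial>lborel) \<le> sqrt ((L2norm f + L2norm g)\<^sup>2)"
    by (rule real_sqrt_le_mono)
  then show ?thesis unfolding L2norm_def[of "\<lambda>x. f x + g x"]
    using L2norm_nonneg[of f] L2norm_nonneg[of g] by simp
qed


lemma L2norm_scale: "L2norm (\<lambda>x. c * f x) = \<bar>c\<bar> * L2norm f"
  by (simp add: L2norm_def power_mult_distrib real_sqrt_mult)

lemma L2norm_commute: "L2norm (\<lambda>x. f x - g x) = L2norm (\<lambda>x. g x - f x)"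
proof -
  have "(\<lambda>x. (f x - g x)\<^sup>2) = (\<lambda>x. (g x - f x)\<^sup>2)" by (simp add: fun_eq_iff power2_commute)
  then show ?thesis by (simp add: L2norm_def)
qed

lemma L2norm_le_H1norm: "L2norm w \<le> H1norm ub w"
proof -
  have "sqrt ((L2norm w)\<^sup>2) \<le> sqrt ((L2norm ub)\<^sup>2 + (L2norm w)\<^sup>2)" by simp
  then show ?thesis using L2norm_nonneg[of w] by (simp add: H1norm_def)
qed

lemma ux_eq: "ux chi w c = (\<lambda>x. w x + c * deriv chi x)" by (simp add: ux_def fun_eq_iff)

lemma ux_L2: assumes "cutoff chi" "L2 w" shows "L2 (ux chi w c)"
  unfolding ux_eq by (intro L2_add L2_scale assms cutoff_L2)

lemma gX_meas: assumes "cutoff chi" "L2 ub" "L2 w" "L2 rb"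
  shows "gX chi ub w c rb k \<in> borel_measurable lborel"
proof -
  note [measurable] = L2_meas[OF assms(2)] L2_meas[OF assms(3)] L2_meas[OF assms(4)] cutoff_meas[OF assms(1)]
  show ?thesis unfolding gX_def[abs_def] gg_def in_Omega1_def gg1_def gg2_def ux_def by measurable
qed

lemma gg_bounds: "1 \<le> gg a1 a2 a3 1 u (u\<^sup>2+r\<^sup>2) r k" "gg a1 a2 a3 1 u (u\<^sup>2+r\<^sup>2) r k \<le> 1 + (u\<^sup>2+r\<^sup>2)"
  by (auto simp: gg_def gg1_def gg2_def in_Omega1_def)

lemma gint: assumes chi: "cutoff chi" and "H1 ub w" "L2 rb"
  shows "integrable lborel (\<lambda>x. gX chi ub w c rb k x - 1)"
proof -
  have L: "L2 ub" "L2 w" using assms(2) by (auto simp: H1_def)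
  have U: "L2 (ux chi w c)" by (rule ux_L2[OF chi L(2)])
  note [measurable] = gX_meas[OF chi L assms(3)]
  have i: "integrable lborel (\<lambda>x. (ux chi w c x)\<^sup>2 + (rb x)\<^sup>2)"
    using L2_sq[OF U] L2_sq[OF assms(3)] by auto
  have m: "(\<lambda>x. gX chi ub w c rb k x - 1) \<in> borel_measurable lborel" by measurable
  show ?thesis
  proof (rule Bochner_Integration.integrable_bound[OF i m AE_I2])
    fix x
    show "norm (gX chi ub w c rb k x - 1) \<le> norm ((ux chi w c x)\<^sup>2 + (rb x)\<^sup>2)"
      using gg_bounds[of x "ub x" c "ux chi w c x" "rb x" k] unfolding gX_def by simp
  qed
qed

lemma final_arith:
  fixes a b c d p q :: real
  assumes "0 \<le> a" "0 \<le> b" "0 \<le> c" "0 \<le> d" "0 \<le> p" "0 \<le> q"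
  shows "2*(p*a) + 2*(p*b) + 2*(q*c) + 2*(q*d) \<le> 2*(a+b+c+d) * (p + q)"
proof -
  have "0 \<le> (a+b)*q" "0 \<le> (c+d)*p" using assms by simp_all
  moreover have "2*(a+b+c+d) * (p + q) = 2*(p*a) + 2*(p*b) + 2*(q*c) + 2*(q*d) + 2*((a+b)*q) + 2*((c+d)*p)"
    by (simp add: algebra_simps)
  ultimately show ?thesis by linarith
qed

lemma lip:
  assumes chi: "cutoff chi" and h1: "H1 ub1 w1" "L2 rb1" and h2: "H1 ub2 w2" "L2 rb2"
    and z: "zero_mismatch rb1 k1 rb2 k2 \<in> null_sets lborel"
  shows "L1norm (\<lambda>x. gX chi ub1 w1 c1 rb1 k1 x - gX chi ub2 w2 c2 rb2 k2 x)
           \<le> 2 * (L2norm (ux chi w1 c1) + L2norm (ux chi w2 c2) + L2norm rb1 + L2norm rb2)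
              * (L2norm (\<lambda>x. ux chi w1 c1 x - ux chi w2 c2 x) + L2norm (\<lambda>x. rb1 x - rb2 x))"
proof -
  have L1: "L2 w1" using h1 by (auto simp: H1_def)
  have L2: "L2 w2" using h2 by (auto simp: H1_def)
  define U1 where "U1 = ux chi w1 c1"
  define U2 where "U2 = ux chi w2 c2"
  have U1: "L2 U1" unfolding U1_def by (rule ux_L2[OF chi L1])
  have U2: "L2 U2" unfolding U2_def by (rule ux_L2[OF chi L2])
  define dU where "dU = (\<lambda>x. U1 x - U2 x)"
  define dR where "dR = (\<lambda>x. rb1 x - rb2 x)"
  have dU: "L2 dU" unfolding dU_def by (intro L2_diff U1 U2)
  have dR: "L2 dR" unfolding dR_def by (intro L2_diff h1 h2)
  define B where "B = (\<lambda>x. 2*(\<bar>dU x\<bar>*\<bar>U1 x\<bar>) + 2*(\<bar>dU x\<bar>*\<bar>U2 x\<bar>) + 2*(\<bar>dR x\<bar>*\<bar>rb1 x\<bar>) + 2*(\<bar>dR x\<bar>*\<bar>rb2 x\<bar>))"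
  have i1: "integrable lborel (\<lambda>x. \<bar>dU x\<bar>*\<bar>U1 x\<bar>)" by (rule L2_abs_prod[OF dU U1])
  have i2: "integrable lborel (\<lambda>x. \<bar>dU x\<bar>*\<bar>U2 x\<bar>)" by (rule L2_abs_prod[OF dU U2])
  have i3: "integrable lborel (\<lambda>x. \<bar>dR x\<bar>*\<bar>rb1 x\<bar>)" by (rule L2_abs_prod[OF dR h1(2)])
  have i4: "integrable lborel (\<lambda>x. \<bar>dR x\<bar>*\<bar>rb2 x\<bar>)" by (rule L2_abs_prod[OF dR h2(2)])
  have iB: "integrable lborel B" unfolding B_def using i1 i2 i3 i4 by auto
  have ae: "AE x in lborel. (rb1 x + k1 = 0) = (rb2 x + k2 = 0)"
    by (rule AE_I'[OF z]) (auto simp: zero_mismatch_def)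
  have "L1norm (\<lambda>x. gX chi ub1 w1 c1 rb1 k1 x - gX chi ub2 w2 c2 rb2 k2 x) \<le> integral\<^sup>L lborel B"
    unfolding L1norm_def
  proof (rule integral_mono_AE'[OF iB])
    show "AE x in lborel. \<bar>gX chi ub1 w1 c1 rb1 k1 x - gX chi ub2 w2 c2 rb2 k2 x\<bar> \<le> B x"
      using ae
    proof eventually_elim
      case (elim x)
      have "\<bar>gX chi ub1 w1 c1 rb1 k1 x - gX chi ub2 w2 c2 rb2 k2 x\<bar>
         \<le> 2*\<bar>U1 x-U2 x\<bar>*(\<bar>U1 x\<bar>+\<bar>U2 x\<bar>) + 2*\<bar>rb1 x-rb2 x\<bar>*(\<bar>rb1 x\<bar>+\<bar>rb2 x\<bar>)"
        unfolding gX_def U1_def U2_def by (rule ptwise[OF elim])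
      also have "\<dots> = B x" unfolding B_def dU_def dR_def by (simp add: algebra_simps)
      finally show ?case .
    qed
    show "AE x in lborel. 0 \<le> B x" unfolding B_def by auto
  qed
  also have "integral\<^sup>L lborel B = 2*(\<integral>x. \<bar>dU x\<bar>*\<bar>U1 x\<bar> \<partial>lborel) + 2*(\<integral>x. \<bar>dU x\<bar>*\<bar>U2 x\<bar> \<partial>lborel)
      + 2*(\<integral>x. \<bar>dR x\<bar>*\<bar>rb1 x\<bar> \<partial>lborel) + 2*(\<integral>x. \<bar>dR x\<bar>*\<bar>rb2 x\<bar> \<partial>lborel)"
    unfolding B_def using i1 i2 i3 i4 by simp
  also have "\<dots> \<le> 2*(L2norm dU * L2norm U1) + 2*(L2norm dU * L2norm U2) + 2*(L2norm dR * L2norm rb1) + 2*(L2norm dR * L2norm rb2)"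
    using CS[OF dU U1] CS[OF dU U2] CS[OF dR h1(2)] CS[OF dR h2(2)] by linarith
  also have "\<dots> \<le> 2 * (L2norm U1 + L2norm U2 + L2norm rb1 + L2norm rb2) * (L2norm dU + L2norm dR)"
    by (intro final_arith L2norm_nonneg)
  finally show ?thesis unfolding U1_def U2_def dU_def dR_def .
qed


lemma conv:
  fixes ubn wn rbn :: "nat \<Rightarrow> real \<Rightarrow> real" and cn kn :: "nat \<Rightarrow> real"
  assumes chi: "cutoff chi" and hn: "\<forall>n. H1 (ubn n) (wn n) \<and> L2 (rbn n)"
    and h: "H1 ub w" "L2 rb"
    and lim: "(\<lambda>n. H1norm (\<lambda>x. ubn n x - ub x) (\<lambda>x. wn n x - w x) + \<bar>cn n - c\<bar>
            + L2norm (\<lambda>x. rbn n x - rb x) + \<bar>kn n - k\<bar>) \<longlonglongrightarrow> 0"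
    and z: "\<forall>n. zero_mismatch rb k (rbn n) (kn n) \<in> null_sets lborel"
  shows "(\<lambda>n. L1norm (\<lambda>x. (gX chi (ubn n) (wn n) (cn n) (rbn n) (kn n) x - 1)
                       - (gX chi ub w c rb k x - 1))) \<longlonglongrightarrow> 0"
proof -
  define s where "s n = H1norm (\<lambda>x. ubn n x - ub x) (\<lambda>x. wn n x - w x) + \<bar>cn n - c\<bar>
            + L2norm (\<lambda>x. rbn n x - rb x) + \<bar>kn n - k\<bar>" for n
  define Ld where "Ld = L2norm (deriv chi)"
  define U where "U = ux chi w c"
  define a where "a = L2norm U"
  define cc where "cc = L2norm rb"
  have Lw: "L2 w" using h by (auto simp: H1_def)
  have Lwn: "L2 (wn n)" for n using hn by (auto simp: H1_def)
  have Lrbn: "L2 (rbn n)" for n using hn by auto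
  have LU: "L2 U" unfolding U_def by (rule ux_L2[OF chi Lw])
  have LUn: "L2 (ux chi (wn n) (cn n))" for n by (rule ux_L2[OF chi Lwn])
  have Ld0: "0 \<le> Ld" unfolding Ld_def by (rule L2norm_nonneg)
  have H1n0: "0 \<le> H1norm f g" for f g by (simp add: H1norm_def)
  have s_ge: "H1norm (\<lambda>x. ubn n x - ub x) (\<lambda>x. wn n x - w x) \<le> s n" "\<bar>cn n - c\<bar> \<le> s n"
     "L2norm (\<lambda>x. rbn n x - rb x) \<le> s n" for n
    unfolding s_def using H1n0[of "\<lambda>x. ubn n x - ub x" "\<lambda>x. wn n x - w x"]
      L2norm_nonneg[of "\<lambda>x. rbn n x - rb x"] abs_ge_zero[of "cn n - c"] abs_ge_zero[of "kn n - k"]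
    by linarith+
  define e where "e n = L2norm (\<lambda>x. U x - ux chi (wn n) (cn n) x)" for n
  define f where "f n = L2norm (\<lambda>x. rb x - rbn n x)" for n
  have e_le: "e n \<le> (1 + Ld) * s n" for n
  proof -
    have eq: "(\<lambda>x. U x - ux chi (wn n) (cn n) x) = (\<lambda>x. (w x - wn n x) + (c - cn n) * deriv chi x)"
      unfolding U_def by (simp add: ux_def fun_eq_iff algebra_simps)
    have "e n \<le> L2norm (\<lambda>x. w x - wn n x) + L2norm (\<lambda>x. (c - cn n) * deriv chi x)"
      unfolding e_def eq by (intro minkowski L2_diff L2_scale Lw Lwn cutoff_L2 chi)
    also have "\<dots> = L2norm (\<lambda>x. wn n x - w x) + \<bar>cn n - c\<bar> * Ld"
      unfolding L2norm_scale Ld_def by (simp add: L2norm_commute[of w] abs_minus_commute)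
    also have "\<dots> \<le> s n + s n * Ld"
      using L2norm_le_H1norm[of "\<lambda>x. wn n x - w x" "\<lambda>x. ubn n x - ub x"] s_ge[of n] Ld0
      by (simp add: add_mono mult_right_mono)
    finally show ?thesis by (simp add: algebra_simps)
  qed
  have f_le: "f n \<le> s n" for n unfolding f_def using s_ge(3)[of n] by (simp add: L2norm_commute[of rb])
  have b_le: "L2norm (ux chi (wn n) (cn n)) \<le> a + e n" for n
  proof -
    have "L2norm (ux chi (wn n) (cn n)) = L2norm (\<lambda>x. U x + (ux chi (wn n) (cn n) x - U x))"
      by (simp add: fun_eq_iff)
    also have "\<dots> \<le> a + L2norm (\<lambda>x. ux chi (wn n) (cn n) x - U x)"
      unfolding a_def by (intro minkowski LU L2_diff LUn)
    also have "\<dots> = a + e n" unfolding e_def by (simp add: L2norm_commute[of U])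
    finally show ?thesis .
  qed
  have d_le: "L2norm (rbn n) \<le> cc + f n" for n
  proof -
    have "L2norm (rbn n) = L2norm (\<lambda>x. rb x + (rbn n x - rb x))"
      by (simp add: fun_eq_iff)
    also have "\<dots> \<le> cc + L2norm (\<lambda>x. rbn n x - rb x)"
      unfolding cc_def by (intro minkowski h(2) L2_diff Lrbn)
    also have "\<dots> = cc + f n" unfolding f_def by (simp add: L2norm_commute[of rb])
    finally show ?thesis .
  qed
  define T where "T n = 2 * (2*a + 2*cc + (1 + Ld) * s n + s n) * ((1 + Ld) * s n + s n)" for n
  have bound: "L1norm (\<lambda>x. (gX chi (ubn n) (wn n) (cn n) (rbn n) (kn n) x - 1)
                       - (gX chi ub w c rb k x - 1)) \<le> T n" for n
  proof -
    have "L1norm (\<lambda>x. (gX chi (ubn n) (wn n) (cn n) (rbn n) (kn n) x - 1) - (gX chi ub w c rb k x - 1))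
        = L1norm (\<lambda>x. gX chi ub w c rb k x - gX chi (ubn n) (wn n) (cn n) (rbn n) (kn n) x)"
      unfolding L1norm_def by (simp add: abs_minus_commute)
    also have "\<dots> \<le> 2 * (a + L2norm (ux chi (wn n) (cn n)) + cc + L2norm (rbn n)) * (e n + f n)"
      unfolding a_def cc_def e_def f_def U_def
      by (rule lip[OF chi h hn[rule_format, THEN conjunct1] Lrbn z[rule_format]])
    also have "\<dots> \<le> T n"
    proof -
      have A: "a + L2norm (ux chi (wn n) (cn n)) + cc + L2norm (rbn n) \<le> 2 * a + 2 * cc + (1 + Ld) * s n + s n"
        using b_le[of n] d_le[of n] e_le[of n] f_le[of n] by linarith
      have B: "e n + f n \<le> (1 + Ld) * s n + s n" using e_le[of n] f_le[of n] by linarith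
      have sn: "0 \<le> s n" using s_ge(2)[of n] by linarith
      then have "0 \<le> (1 + Ld) * s n" using Ld0 by simp
      then have C: "0 \<le> 2 * a + 2 * cc + (1 + Ld) * s n + s n"
        using sn unfolding a_def cc_def using L2norm_nonneg[of U] L2norm_nonneg[of rb] by linarith
      have D: "0 \<le> e n + f n" unfolding e_def f_def
        using L2norm_nonneg[of "\<lambda>x. U x - ux chi (wn n) (cn n) x"] L2norm_nonneg[of "\<lambda>x. rb x - rbn n x"]
        by linarith
      have "(2 * (a + L2norm (ux chi (wn n) (cn n)) + cc + L2norm (rbn n))) * (e n + f n)
         \<le> (2 * (2 * a + 2 * cc + (1 + Ld) * s n + s n)) * ((1 + Ld) * s n + s n)"
      proof (rule mult_mono[OF _ B _ D])
        show "2 * (a + L2norm (ux chi (wn n) (cn n)) + cc + L2norm (rbn n))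
          \<le> 2 * (2 * a + 2 * cc + (1 + Ld) * s n + s n)" using A by (simp only: mult_le_cancel_left_pos zero_less_numeral)
        show "0 \<le> 2 * (2 * a + 2 * cc + (1 + Ld) * s n + s n)" using C by (simp only: zero_le_mult_iff zero_le_numeral simp_thms)
      qed
      then show ?thesis by (simp add: T_def)
    qed
    finally show ?thesis .
  qed
  have s0: "s \<longlonglongrightarrow> 0" using lim unfolding s_def[abs_def] .
  have "T \<longlonglongrightarrow> 2 * (2*a + 2*cc + (1 + Ld) * 0 + 0) * ((1 + Ld) * 0 + 0)"
    unfolding T_def[abs_def] by (intro tendsto_intros s0)
  then have T0: "T \<longlonglongrightarrow> 0" by simp
  show ?thesis
  proof (rule tendsto_sandwich[OF _ _ tendsto_const T0])
    show "\<forall>\<^sub>F n in sequentially. 0 \<le> L1norm (\<lambda>x. (gX chi (ubn n) (wn n) (cn n) (rbn n) (kn n) x - 1)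
                       - (gX chi ub w c rb k x - 1))"
      unfolding L1norm_def by (intro always_eventually allI integral_nonneg_AE) auto
    show "\<forall>\<^sub>F n in sequentially. L1norm (\<lambda>x. (gX chi (ubn n) (wn n) (cn n) (rbn n) (kn n) x - 1)
                       - (gX chi ub w c rb k x - 1)) \<le> T n"
      using bound by (intro always_eventually allI)
  qed
qed

theorem lemma7p2:
  fixes chi :: "real \<Rightarrow> real"
  assumes chi: "cutoff chi"
  shows
   "(\<forall>ub w c rb k. H1 ub w \<and> L2 rb \<longrightarrow>
        integrable lborel (\<lambda>x. gX chi ub w c rb k x - 1))
    \<and>
    (\<exists>C :: real \<Rightarrow> real \<Rightarrow> real \<Rightarrow> real \<Rightarrow> real.
       \<forall>ub1 w1 c1 rb1 k1 ub2 w2 c2 rb2 k2.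
         H1 ub1 w1 \<and> L2 rb1 \<and> H1 ub2 w2 \<and> L2 rb2 \<and>
         zero_mismatch rb1 k1 rb2 k2 \<in> null_sets lborel \<longrightarrow>
         L1norm (\<lambda>x. gX chi ub1 w1 c1 rb1 k1 x - gX chi ub2 w2 c2 rb2 k2 x)
           \<le> C (L2norm (ux chi w1 c1)) (L2norm (ux chi w2 c2)) (L2norm rb1) (L2norm rb2)
              * (L2norm (\<lambda>x. ux chi w1 c1 x - ux chi w2 c2 x)
                 + L2norm (\<lambda>x. rb1 x - rb2 x)))
    \<and>
    (\<forall>(ubn :: nat \<Rightarrow> real \<Rightarrow> real) wn cn rbn kn ub w c rb k.
       (\<forall>n. H1 (ubn n) (wn n) \<and> L2 (rbn n)) \<and> H1 ub w \<and> L2 rb \<and>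
       (\<lambda>n. H1norm (\<lambda>x. ubn n x - ub x) (\<lambda>x. wn n x - w x) + \<bar>cn n - c\<bar>
            + L2norm (\<lambda>x. rbn n x - rb x) + \<bar>kn n - k\<bar>) \<longlonglongrightarrow> 0 \<and>
       (\<forall>n. zero_mismatch rb k (rbn n) (kn n) \<in> null_sets lborel) \<longrightarrow>
       (\<lambda>n. L1norm (\<lambda>x. (gX chi (ubn n) (wn n) (cn n) (rbn n) (kn n) x - 1)
                       - (gX chi ub w c rb k x - 1))) \<longlonglongrightarrow> 0)"
proof (intro conjI)
  show "\<forall>ub w c rb k. H1 ub w \<and> L2 rb \<longrightarrow> integrable lborel (\<lambda>x. gX chi ub w c rb k x - 1)"
    using gint[OF chi] by blast
  show "\<exists>C :: real \<Rightarrow> real \<Rightarrow> real \<Rightarrow> real \<Rightarrow> real.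
       \<forall>ub1 w1 c1 rb1 k1 ub2 w2 c2 rb2 k2.
         H1 ub1 w1 \<and> L2 rb1 \<and> H1 ub2 w2 \<and> L2 rb2 \<and>
         zero_mismatch rb1 k1 rb2 k2 \<in> null_sets lborel \<longrightarrow>
         L1norm (\<lambda>x. gX chi ub1 w1 c1 rb1 k1 x - gX chi ub2 w2 c2 rb2 k2 x)
           \<le> C (L2norm (ux chi w1 c1)) (L2norm (ux chi w2 c2)) (L2norm rb1) (L2norm rb2)
              * (L2norm (\<lambda>x. ux chi w1 c1 x - ux chi w2 c2 x)
                 + L2norm (\<lambda>x. rb1 x - rb2 x))"
    by (rule exI[where x="\<lambda>a b c d. 2 * (a + b + c + d)"], intro allI impI, elim conjE)
       (rule lip[OF chi], assumption+)
  show "\<forall>(ubn :: nat \<Rightarrow> real \<Rightarrow> real) wn cn rbn kn ub w c rb k.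
       (\<forall>n. H1 (ubn n) (wn n) \<and> L2 (rbn n)) \<and> H1 ub w \<and> L2 rb \<and>
       (\<lambda>n. H1norm (\<lambda>x. ubn n x - ub x) (\<lambda>x. wn n x - w x) + \<bar>cn n - c\<bar>
            + L2norm (\<lambda>x. rbn n x - rb x) + \<bar>kn n - k\<bar>) \<longlonglongrightarrow> 0 \<and>
       (\<forall>n. zero_mismatch rb k (rbn n) (kn n) \<in> null_sets lborel) \<longrightarrow>
       (\<lambda>n. L1norm (\<lambda>x. (gX chi (ubn n) (wn n) (cn n) (rbn n) (kn n) x - 1)
                       - (gX chi ub w c rb k x - 1))) \<longlonglongrightarrow> 0"
    using conv[OF chi] by blast
qed

end
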